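(* Let $d\in\mathbb{N}_+$, $T>0$, and let $f\colon\mathbb{R}^d\times[0,T]\to\mathbb{R}^d$ be continuous in $t$ with $\|f(x,t)-f(y,t)\|\le L\|x-y\|$ for all $x,y\in\mathbb{R}^d$, $t\in[0,T]$, for some $L>0$. Let $K\subseteq\mathbb{R}^d$ be compact and for $t\in[0,T]$ define $$K_t:=\Big\{x\in\mathbb{R}^d:\ \|x\|\le\sup_{z\in K}\Big(\|z\|+t+\int_0^t\|f(0,s)\|\,ds\Big)\exp(Lt)\Big\}.$$ Let $f_1\in\mathcal{C}(\mathbb{R}^d\times[0,T];\mathbb{R}^d)$ be locally Lipschitz in $x$ and satisfy $\|f_1-f\|_{L^\infty(K_T\times[0,T];\mathbb{R}^d)}\le1$, and let $\mathbf{y}$ be the solution of $\dot{\mathbf y}=f_1(\mathbf y,t)$, $\mathbf y(0)=z_0\in K$. Then $\mathbf y(t)\in K_t$ for every $t\in[0,T]$.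
   Context: $\|\cdot\|$ denotes the Euclidean norm on $\mathbb{R}^d$. *)

theory Defs
  imports "HOL-Analysis.Analysis"
begin

definition Kt :: "'a::euclidean_space set \<Rightarrow> ('a \<Rightarrow> real \<Rightarrow> 'a) \<Rightarrow> real \<Rightarrow> real \<Rightarrow> 'a set" where
  "Kt K f L t = {x. norm x \<le>
     (SUP z\<in>K. (norm z + t + integral {0..t} (\<lambda>s. norm (f 0 s))) * exp (L * t))}"

end

theory Submission
  imports Defs
begin

lemma gron:
  fixes y y' :: "real \<Rightarrow> 'a::euclidean_space" and I c :: "real \<Rightarrow> real"
  assumes t1: "0 \<le> t1" "t1 \<le> T"
    and yd: "\<And>s. s \<in> {0..T} \<Longrightarrow> (y has_vector_derivative y' s) (at s within {0..T})"
    and Id: "\<And>s. s \<in> {0..T} \<Longrightarrow> (I has_real_derivative c s) (at s within {0..T})"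
    and cnn: "\<And>s. c s \<ge> 0"
    and bound: "\<And>s. 0 < s \<Longrightarrow> s < t1 \<Longrightarrow> norm (y' s) \<le> L * norm (y s) + c s + 1"
    and L: "L \<ge> 0" and I0: "I 0 = 0"
  shows "norm (y t1) \<le> (norm (y 0) + t1 + I t1) * exp (L * t1)"
proof -
  have main: "norm (y t1) \<le> (norm (y 0) + t1 + I t1) * exp (L * t1) + d * exp (L * t1)" if d: "d > 0" for d
  proof -
    define p where "p s = sqrt (y s \<bullet> y s + d\<^sup>2)" for s
    define G where "G s = exp (- L * s) * p s - s - I s" for s
    have ppos: "p s > 0" for s unfolding p_def using d
      by (simp add: add_nonneg_pos)
    have pge: "norm (y s) \<le> p s" for s unfolding p_def
      by (simp add: norm_eq_sqrt_inner)
    define G' where "G' s = - L * exp (- L * s) * p s + exp (- L * s) * ((y s \<bullet> y' s) / p s) - 1 - c s" for s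
    have Gd: "(G has_real_derivative G' s) (at s within {0..T})" if s: "s \<in> {0..T}" for s
    proof -
      have "((\<lambda>s. y s \<bullet> y s + d\<^sup>2) has_real_derivative 2 * (y s \<bullet> y' s)) (at s within {0..T})"
      proof -
        have "((\<lambda>s. y s \<bullet> y s) has_derivative (\<lambda>h. y s \<bullet> (h *\<^sub>R y' s) + (h *\<^sub>R y' s) \<bullet> y s)) (at s within {0..T})"
          using has_derivative_inner[OF yd[OF s, unfolded has_vector_derivative_def] yd[OF s, unfolded has_vector_derivative_def]] .
        then have "((\<lambda>s. y s \<bullet> y s) has_real_derivative 2 * (y s \<bullet> y' s)) (at s within {0..T})"
          unfolding has_field_derivative_def
          by (rule has_derivative_eq_rhs) (auto simp: fun_eq_iff inner_commute algebra_simps)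
        then show ?thesis by (auto intro!: derivative_eq_intros)
      qed
      note q = this
      have pos: "0 < y s \<bullet> y s + d\<^sup>2" using d by (simp add: add_nonneg_pos)
      have "(p has_real_derivative (inverse (sqrt (y s \<bullet> y s + d\<^sup>2)) / 2) * (2 * (y s \<bullet> y' s))) (at s within {0..T})"
        unfolding p_def by (rule DERIV_chain2[OF DERIV_real_sqrt[OF pos] q])
      then have "(p has_real_derivative (y s \<bullet> y' s) / p s) (at s within {0..T})"
        by (rule DERIV_cong) (simp add: p_def field_simps)
      then show ?thesis unfolding G_def G'_def
        by (auto intro!: derivative_eq_intros Id[OF s] simp: algebra_simps)
    qed
    have Gneg: "G' s \<le> 0" if s: "0 < s" "s < t1" for s
    proof -
      have "y s \<bullet> y' s \<le> norm (y s) * norm (y' s)" by (rule Cauchy_Schwarz_ineq2[THEN order_trans[OF abs_ge_self]])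
      also have "\<dots> \<le> p s * norm (y' s)" using pge[of s] by (simp add: mult_right_mono)
      finally have "(y s \<bullet> y' s) / p s \<le> norm (y' s)" using ppos[of s] by (simp add: divide_simps mult.commute)
      also have "\<dots> \<le> L * p s + c s + 1" using bound[OF s] pge[of s] L
      proof -
        have "L * norm (y s) \<le> L * p s" using pge[of s] L by (rule mult_left_mono)
        then show ?thesis using bound[OF s] by linarith
      qed
      finally have A: "(y s \<bullet> y' s) / p s - L * p s \<le> c s + 1" by simp
      have E: "exp (- L * s) \<le> 1" using L s by simp
      have "exp (- L * s) * ((y s \<bullet> y' s) / p s - L * p s) \<le> exp (- L * s) * (c s + 1)"
        using A by (simp add: mult_left_mono)
      also have "\<dots> \<le> c s + 1" using E cnn[of s] by (simp add: mult_left_le_one_le)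
      finally show ?thesis unfolding G'_def by (simp add: algebra_simps)
    qed
    have cont: "continuous_on {0..t1} G"
      by (rule continuous_on_subset[OF DERIV_continuous_on[OF Gd]]) (use t1 in auto)
    have "G t1 \<le> G 0"
    proof (rule DERIV_nonpos_imp_decreasing_open[OF t1(1) _ cont])
      fix x assume x: "0 < x" "x < t1"
      then have "x \<in> interior {0..T}" using t1 by auto
      then have eq: "at x within {0..T} = at x" by (rule at_within_interior)
      have "x \<in> {0..T}" using x t1 by auto
      from Gd[OF this] have "(G has_real_derivative G' x) (at x)" unfolding eq .
      then show "\<exists>z. (G has_real_derivative z) (at x) \<and> z \<le> 0" using Gneg[OF x] by blast
    qed
    also have "G 0 = p 0" unfolding G_def using I0 by simp
    also have "p 0 \<le> norm (y 0) + d" unfolding p_def using d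
    proof -
      have "y 0 \<bullet> y 0 + d\<^sup>2 \<le> (norm (y 0) + d)\<^sup>2"
        using d by (simp add: dot_square_norm power2_sum)
      then show "sqrt (y 0 \<bullet> y 0 + d\<^sup>2) \<le> norm (y 0) + d"
        using d by (intro real_le_lsqrt) auto
    qed
    finally have "exp (- L * t1) * p t1 \<le> norm (y 0) + d + t1 + I t1" unfolding G_def by simp
    then have "exp (L * t1) * (exp (- L * t1) * p t1) \<le> exp (L * t1) * (norm (y 0) + d + t1 + I t1)"
      by (simp add: mult_left_mono)
    then have "p t1 \<le> exp (L * t1) * (norm (y 0) + d + t1 + I t1)"
      by (simp add: mult.assoc[symmetric] exp_add[symmetric])
    then show ?thesis using pge[of t1] by (simp add: algebra_simps)
  qed
  show ?thesis
  proof (rule field_le_epsilon)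
    fix e :: real assume e: "0 < e"
    show "norm (y t1) \<le> (norm (y 0) + t1 + I t1) * exp (L * t1) + e"
      using main[of "e / exp (L * t1)"] e by simp
  qed
qed


theorem lemma3p2:
  fixes f f1 :: "'a::euclidean_space \<Rightarrow> real \<Rightarrow> 'a"
    and T L :: real and K :: "'a set" and z0 :: 'a and y :: "real \<Rightarrow> 'a"
  assumes T_pos: "T > 0"
    and f_cont_t: "\<And>x. continuous_on {0..T} (f x)"
    and L_pos: "L > 0"
    and f_lip: "\<And>x y t. t \<in> {0..T} \<Longrightarrow> norm (f x t - f y t) \<le> L * norm (x - y)"
    and K_compact: "compact K"
    and f1_cont: "continuous_on (UNIV \<times> {0..T}) (\<lambda>(x, t). f1 x t)"
    and f1_loclip: "local_lipschitz {0..T} UNIV (\<lambda>t x. f1 x t)"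
    and f1_close: "\<And>x t. x \<in> Kt K f L T \<Longrightarrow> t \<in> {0..T} \<Longrightarrow> norm (f1 x t - f x t) \<le> 1"
    and z0_in: "z0 \<in> K"
    and y_init: "y 0 = z0"
    and y_sol: "\<And>t. t \<in> {0..T} \<Longrightarrow> (y has_vector_derivative f1 (y t) t) (at t within {0..T})"
  shows "\<forall>t\<in>{0..T}. y t \<in> Kt K f L t"
proof -
  define c where "c s = norm (f 0 s)" for s
  define I where "I t = integral {0..t} c" for t
  define R where "R t = (SUP z\<in>K. (norm z + t + I t) * exp (L * t))" for t
  define r0 where "r0 t = (norm z0 + t + I t) * exp (L * t)" for t
  have Kt_eq: "Kt K f L t = {x. norm x \<le> R t}" for t
    unfolding Kt_def R_def I_def c_def by simp
  have cf: "continuous_on {0..T} c" unfolding c_def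
    by (intro continuous_on_norm f_cont_t)
  have Id: "(I has_real_derivative c s) (at s within {0..T})" if "s \<in> {0..T}" for s
    unfolding I_def by (rule integral_has_real_derivative[OF cf that])
  have cnn: "c s \<ge> 0" for s unfolding c_def by simp
  have I0: "I 0 = 0" unfolding I_def by simp
  obtain B where B: "\<And>z. z \<in> K \<Longrightarrow> norm z \<le> B"
    using compact_imp_bounded[OF K_compact] unfolding bounded_iff by blast
  have r0R: "r0 t \<le> R t" for t
    unfolding r0_def R_def
  proof (rule cSUP_upper[OF z0_in])
    show "bdd_above ((\<lambda>z. (norm z + t + I t) * exp (L * t)) ` K)"
    proof (rule bdd_aboveI2)
      fix z assume "z \<in> K"
      then show "(norm z + t + I t) * exp (L * t) \<le> (B + t + I t) * exp (L * t)"
        using B by (intro mult_right_mono) auto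
    qed
  qed
  have bound: "norm (f1 (y s) s) \<le> L * norm (y s) + c s + 1"
    if s: "s \<in> {0..T}" and ys: "norm (y s) \<le> R T" for s
  proof -
    have "y s \<in> Kt K f L T" using ys Kt_eq by simp
    from f1_close[OF this s] have "norm (f1 (y s) s - f (y s) s) \<le> 1" .
    moreover have "norm (f (y s) s - f 0 s) \<le> L * norm (y s)" using f_lip[OF s, of "y s" 0] by simp
    moreover have "norm (f1 (y s) s) \<le> norm (f1 (y s) s - f (y s) s) + norm (f (y s) s - f 0 s) + norm (f 0 s)"
      proof -
        have e: "f1 (y s) s = ((f1 (y s) s - f (y s) s) + (f (y s) s - f 0 s)) + f 0 s" by simp
        have "norm (f1 (y s) s) \<le> norm ((f1 (y s) s - f (y s) s) + (f (y s) s - f 0 s)) + norm (f 0 s)"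
          by (subst e) (rule norm_triangle_ineq)
        also have "\<dots> \<le> norm (f1 (y s) s - f (y s) s) + norm (f (y s) s - f 0 s) + norm (f 0 s)"
          using norm_triangle_ineq by (rule add_right_mono)
        finally show ?thesis .
      qed
    ultimately show ?thesis unfolding c_def by linarith
  qed
  have key: "norm (y t1) \<le> r0 t1"
    if t1: "0 \<le> t1" "t1 \<le> T" and inside: "\<And>s. 0 < s \<Longrightarrow> s < t1 \<Longrightarrow> norm (y s) \<le> R T" for t1
    unfolding r0_def y_init[symmetric]
  proof (rule gron[OF t1 y_sol Id cnn _ less_imp_le[OF L_pos] I0])
    fix s assume s: "0 < s" "s < t1"
    show "norm (f1 (y s) s) \<le> L * norm (y s) + c s + 1"
      using s t1 by (intro bound inside) auto
  qed auto
  have ycont: "continuous_on {0..T} y"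
    unfolding continuous_on_eq_continuous_within
    using y_sol has_vector_derivative_continuous by blast
  have Imono: "I a \<le> I b" if "0 \<le> a" "a \<le> b" "b \<le> T" for a b
    unfolding I_def
  proof (rule integral_subset_le)
    show "c integrable_on {0..a}" using that
      by (intro integrable_continuous_real continuous_on_subset[OF cf]) auto
    show "c integrable_on {0..b}" using that
      by (intro integrable_continuous_real continuous_on_subset[OF cf]) auto
  qed (use that cnn in auto)
  have allin: "norm (y t) \<le> R T" if t: "t \<in> {0..T}" for t
  proof (rule ccontr)
    assume "\<not> norm (y t) \<le> R T"
    then have gt: "norm (y t) > R T" by simp
    define A where "A = {0..T} \<inter> (\<lambda>s. norm (y s)) -` {R T..}"
    have tA: "t \<in> A" using t gt unfolding A_def by auto
    have clA: "closed A" unfolding A_def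
      by (intro continuous_closed_preimage continuous_on_norm ycont) auto
    have bA: "bdd_below A" unfolding A_def by (rule bdd_belowI[of _ 0]) auto
    define \<tau> where "\<tau> = Inf A"
    have tauA: "\<tau> \<in> A" unfolding \<tau>_def using closed_contains_Inf[OF _ bA clA] tA by blast
    have taut: "\<tau> \<le> t" unfolding \<tau>_def by (rule cInf_lower[OF tA bA])
    have tau: "0 \<le> \<tau>" "\<tau> \<le> T" "R T \<le> norm (y \<tau>)" using tauA unfolding A_def by auto
    have "norm (y \<tau>) \<le> r0 \<tau>"
    proof (rule key[OF tau(1,2)])
      fix s assume s: "0 < s" "s < \<tau>"
      have "s \<notin> A"
      proof
        assume "s \<in> A"
        then have "\<tau> \<le> s" unfolding \<tau>_def by (rule cInf_lower[OF _ bA])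
        then show False using s by simp
      qed
      then show "norm (y s) \<le> R T" using s tau unfolding A_def by auto
    qed
    show False
    proof (cases "\<tau> < T")
      case True
      have "norm z0 + \<tau> + I \<tau> < norm z0 + T + I T" using Imono[of \<tau> T] tau True by simp
      moreover have "exp (L * \<tau>) \<le> exp (L * T)" using tau L_pos by simp
      moreover have "0 \<le> norm z0 + \<tau> + I \<tau>" using tau I0 Imono[of 0 \<tau>] by simp
      ultimately have "r0 \<tau> < r0 T" unfolding r0_def
      proof -
        assume a: "norm z0 + \<tau> + I \<tau> < norm z0 + T + I T" and e: "exp (L * \<tau>) \<le> exp (L * T)"
          and n: "0 \<le> norm z0 + \<tau> + I \<tau>"
        have "(norm z0 + \<tau> + I \<tau>) * exp (L * \<tau>) \<le> (norm z0 + \<tau> + I \<tau>) * exp (L * T)"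
          using e n by (rule mult_left_mono)
        also have "\<dots> < (norm z0 + T + I T) * exp (L * T)"
          using a by (intro mult_strict_right_mono) auto
        finally show "(norm z0 + \<tau> + I \<tau>) * exp (L * \<tau>) < (norm z0 + T + I T) * exp (L * T)" .
      qed
      then show False using \<open>norm (y \<tau>) \<le> r0 \<tau>\<close> r0R[of T] tau by linarith
    next
      case False
      then have "\<tau> = T" "t = T" using tau taut t by auto
      then show False using \<open>norm (y \<tau>) \<le> r0 \<tau>\<close> r0R[of T] gt by simp
    qed
  qed
  show ?thesis
  proof
    fix t assume t: "t \<in> {0..T}"
    have "norm (y t) \<le> r0 t"
      using t by (intro key allin) auto
    then show "y t \<in> Kt K f L t" using r0R[of t] Kt_eq by auto
  qed
qed

end
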